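(* Consider the symmetric two-cell load coupling model described in the context, and let $\bm{\kappa}=(\kappa_1,\dots,\kappa_{2m})\in\{0,1\}^{2m}$ be a JT pattern such that $\kappa_j=\kappa_{m+j}$ for all $j\in\{1,\dots,m\}$. Suppose the coupled system for $\bm{\kappa}$ has a fixed point $(x_1,x_2)$ with $x_1,x_2>0$ (the load at convergence). Then the UE loads evaluated at this fixed point satisfy $y_j=y_{m+j}$ for every $j\in\{1,\dots,m\}$.
   Context: Two-cell model: there are two cells (cell 1 and cell 2) and $2m$ UEs indexed $1,\dots,2m$; UEs $1,\dots,m$ are (originally) served by cell 1 and UEs $m+1,\dots,2m$ by cell 2. Transmit powers per resource block satisfy $p_1=p_2=p>0$; channel gains $g_{ij}>0$ satisfy $g_{1,j}=g_{2,m+j}$ and $g_{1,m+j}=g_{2,j}$ for all $j\in\{1,\dots,m\}$; user demands satisfy $d_j=d_{m+j}>0$; the noise power is $\sigma^2>0$. For each UE $j$ define the constant $c_j=\dfrac{d_j}{\log_2\left(1+\frac{p_1g_{1j}+p_2g_{2j}}{\sigma^2}\right)}$. A JT pattern is $\bm{\kappa}\in\{0,1\}^{2m}$, where $\kappa_j=1$ means UE $j$ is served jointly by both cells. Given $\bm\kappa$ and loads $x_1,x_2$, the UE loads are $y_j=\dfrac{(1-\kappa_j)d_j}{\log_2\left(1+\frac{p_1g_{1j}}{p_2g_{2j}x_2+\sigma^2}\right)}+c_j\kappa_j$ for $j\in\{1,\dots,m\}$ and $y_j=\dfrac{(1-\kappa_j)d_j}{\log_2\left(1+\frac{p_2g_{2j}}{p_1g_{1j}x_1+\sigma^2}\right)}+c_j\kappa_j$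 for $j\in\{m+1,\dots,2m\}$, and the cell loads are coupled via $x_1=\sum_{j=1}^m y_j$, $x_2=\sum_{j=m+1}^{2m}y_j$. The load at convergence for $\bm\kappa$ is a solution $(x_1,x_2)$ of this coupled system (unique when it exists). *)

theory Defs
  imports "HOL-Analysis.Analysis"
begin

text \<open>Two-cell load coupling model. Cells are indexed 1 and 2, UEs 1..2m.
  g i j is the channel gain from cell i to UE j.\<close>

definition jt_const :: "real \<Rightarrow> real \<Rightarrow> (nat \<Rightarrow> nat \<Rightarrow> real) \<Rightarrow> (nat \<Rightarrow> real) \<Rightarrow> real \<Rightarrow> nat \<Rightarrow> real" where
  "jt_const p1 p2 g d \<sigma>2 j = d j / log 2 (1 + (p1 * g 1 j + p2 * g 2 j) / \<sigma>2)"

definition ue_load :: "nat \<Rightarrow> real \<Rightarrow> real \<Rightarrow> (nat \<Rightarrow> nat \<Rightarrow> real) \<Rightarrow> (nat \<Rightarrow> real) \<Rightarrow> real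
      \<Rightarrow> (nat \<Rightarrow> real) \<Rightarrow> real \<Rightarrow> real \<Rightarrow> nat \<Rightarrow> real" where
  "ue_load m p1 p2 g d \<sigma>2 \<kappa> x1 x2 j =
     (if j \<le> m then
        (1 - \<kappa> j) * d j / log 2 (1 + p1 * g 1 j / (p2 * g 2 j * x2 + \<sigma>2))
      else
        (1 - \<kappa> j) * d j / log 2 (1 + p2 * g 2 j / (p1 * g 1 j * x1 + \<sigma>2)))
     + jt_const p1 p2 g d \<sigma>2 j * \<kappa> j"

definition is_fixed_point :: "nat \<Rightarrow> real \<Rightarrow> real \<Rightarrow> (nat \<Rightarrow> nat \<Rightarrow> real) \<Rightarrow> (nat \<Rightarrow> real) \<Rightarrow> real
      \<Rightarrow> (nat \<Rightarrow> real) \<Rightarrow> real \<Rightarrow> real \<Rightarrow> bool" where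
  "is_fixed_point m p1 p2 g d \<sigma>2 \<kappa> x1 x2 \<longleftrightarrow>
     x1 = (\<Sum>j=1..m. ue_load m p1 p2 g d \<sigma>2 \<kappa> x1 x2 j) \<and>
     x2 = (\<Sum>j=m+1..2*m. ue_load m p1 p2 g d \<sigma>2 \<kappa> x1 x2 j)"

end

theory Submission
  imports Defs
begin

lemma mono_aux:
  fixes a b s t \<sigma>2 k c :: real
  assumes "a > 0" "b > 0" "\<sigma>2 > 0" "0 < s" "s \<le> t" "k \<ge> 0"
  shows "k / log 2 (1 + a / (b * s + \<sigma>2)) \<le> k / log 2 (1 + a / (b * t + \<sigma>2))"
proof -
  have p1: "b * s + \<sigma>2 > 0" using assms by (simp add: add_pos_pos)
  have p2: "b * s + \<sigma>2 \<le> b * t + \<sigma>2" using assms by simp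
  have q: "a / (b * t + \<sigma>2) \<le> a / (b * s + \<sigma>2)"
    using p1 p2 assms(1) by (intro divide_left_mono) auto
  have r: "0 < a / (b * t + \<sigma>2)" using p1 p2 assms(1) by simp
  have l1: "log 2 (1 + a / (b * t + \<sigma>2)) > 0" using r by simp
  have l2: "log 2 (1 + a / (b * t + \<sigma>2)) \<le> log 2 (1 + a / (b * s + \<sigma>2))"
    using q r by simp
  show ?thesis using l1 l2 assms(6) by (intro divide_left_mono) (auto intro: mult_pos_pos)
qed

theorem lemma1:
  fixes m :: nat and p1 p2 p \<sigma>2 x1 x2 :: real
    and g :: "nat \<Rightarrow> nat \<Rightarrow> real" and d \<kappa> :: "nat \<Rightarrow> real"
  assumes "p > 0" and "p1 = p" and "p2 = p"
    and "\<sigma>2 > 0"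
    and "\<And>i j. i \<in> {1, 2} \<Longrightarrow> j \<in> {1..2*m} \<Longrightarrow> g i j > 0"
    and "\<And>j. j \<in> {1..m} \<Longrightarrow> g 1 j = g 2 (m + j) \<and> g 1 (m + j) = g 2 j"
    and "\<And>j. j \<in> {1..m} \<Longrightarrow> d j = d (m + j)"
    and "\<And>j. j \<in> {1..2*m} \<Longrightarrow> d j > 0"
    and "\<And>j. j \<in> {1..2*m} \<Longrightarrow> \<kappa> j \<in> {0, 1}"
    and "\<And>j. j \<in> {1..m} \<Longrightarrow> \<kappa> j = \<kappa> (m + j)"
    and "is_fixed_point m p1 p2 g d \<sigma>2 \<kappa> x1 x2"
    and "x1 > 0" and "x2 > 0"
  shows "\<forall>j\<in>{1..m}. ue_load m p1 p2 g d \<sigma>2 \<kappa> x1 x2 j = ue_load m p1 p2 g d \<sigma>2 \<kappa> x1 x2 (m + j)"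
proof -
  define f where "f j t = (1 - \<kappa> j) * d j / log 2 (1 + p * g 1 j / (p * g 2 j * t + \<sigma>2))
      + jt_const p p g d \<sigma>2 j * \<kappa> j" for j t
  let ?y = "ue_load m p1 p2 g d \<sigma>2 \<kappa> x1 x2"
  have A: "?y j = f j x2" if "j \<in> {1..m}" for j
    using that assms(2,3) by (simp add: ue_load_def f_def)
  have B: "?y (m + j) = f j x1" if "j \<in> {1..m}" for j
  proof -
    have "g 1 j = g 2 (m + j)" "g 1 (m + j) = g 2 j" "d j = d (m+j)" "\<kappa> j = \<kappa> (m+j)"
      using assms(6,7,10) that by auto
    moreover have "jt_const p p g d \<sigma>2 (m+j) = jt_const p p g d \<sigma>2 j"
      using calculation by (simp add: jt_const_def add.commute)
    ultimately show ?thesis using that assms(2,3)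
      by (simp add: ue_load_def f_def mult.commute)
  qed
  have M: "f j s \<le> f j t" if "j \<in> {1..m}" "0 < s" "s \<le> t" for j s t
  proof -
    have j2: "j \<in> {1..2*m}" using that by auto
    have "\<kappa> j \<in> {0,1}" "d j > 0" "g 1 j > 0" "g 2 j > 0"
      using assms(5,8,9) j2 by auto
    then have "(1 - \<kappa> j) * d j \<ge> 0" by auto
    then have "(1 - \<kappa> j) * d j / log 2 (1 + p * g 1 j / (p * g 2 j * s + \<sigma>2))
        \<le> (1 - \<kappa> j) * d j / log 2 (1 + p * g 1 j / (p * g 2 j * t + \<sigma>2))"
      using \<open>g 1 j > 0\<close> \<open>g 2 j > 0\<close> assms(1,4) that
      by (intro mono_aux) auto
    then show ?thesis by (simp add: f_def)
  qed
  have S2: "(\<Sum>j=m+1..2*m. ?y j) = (\<Sum>j=1..m. ?y (m + j))"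
  proof -
    have "(\<Sum>j=m+1..2*m. ?y j) = (\<Sum>j=1+m..m+m. ?y j)" by (simp add: mult_2 add.commute)
    also have "\<dots> = (\<Sum>j=1..m. ?y (j + m))" by (rule sum.shift_bounds_cl_nat_ivl)
    finally show ?thesis by (simp add: add.commute)
  qed
  have X1: "x1 = (\<Sum>j=1..m. f j x2)"
    using assms(11) A unfolding is_fixed_point_def by (metis (no_types, lifting) sum.cong)
  have X2: "x2 = (\<Sum>j=1..m. f j x1)"
    using assms(11) B S2 unfolding is_fixed_point_def by (metis (no_types, lifting) sum.cong)
  have eq: "x1 = x2"
  proof (rule ccontr)
    assume "x1 \<noteq> x2"
    then consider "x1 < x2" | "x2 < x1" by linarith
    then show False
    proof cases
      case 1
      have "(\<Sum>j=1..m. f j x1) \<le> (\<Sum>j=1..m. f j x2)"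
        using M 1 assms(12) by (intro sum_mono) auto
      then show False using X1 X2 1 by linarith
    next
      case 2
      have "(\<Sum>j=1..m. f j x2) \<le> (\<Sum>j=1..m. f j x1)"
        using M 2 assms(13) by (intro sum_mono) auto
      then show False using X1 X2 2 by linarith
    qed
  qed
  show ?thesis using A B eq by simp
qed

end
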